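(* Fix $k=1$ and $\epsilon$ with $0\le\epsilon\le1/2$, and assume $m^{\epsilon}\le\sqrt n$. Any deterministic coverage oracle that stores a datastructure of at most $b=nm^{1-2\epsilon}$ bits does not attain an approximation ratio of $O(m^{\epsilon-\delta})$ for any constant $\delta>0$.
   Context: A set system with $n$ items and $m$ sets is a pair $(\mathcal X,\mathcal I)$ with $\mathcal X=\{1,\dots,n\}$ and $\mathcal I$ an indexed family of $m$ subsets of $\mathcal X$. For $k\ge1$ and a query $Q\subseteq\mathcal X$, $OPT(k,\mathcal X,\mathcal I,Q)=\max\{|(\bigcup_{S\in\mathcal J}S)\cap Q| : \mathcal J\subseteq\mathcal I,|\mathcal J|\le k\}$. A deterministic coverage oracle consists of a deterministic static stage mapping $(n,m,k,(\mathcal X,\mathcal I))$ to a bit string $\mathcal D$ (the datastructure), and a deterministic dynamic stage mapping $(\mathcal D,Q)$, for $Q\subseteq\mathcal X$, to (indices of) $\mathcal J\subseteq\mathcal I$ with $|\mathcal J|\le k$, without access to $(\mathcal X,\mathcal I)$; $\mathcal A(k,\mathcal X,\mathcal I,Q)=|(\bigcup_{S\in\mathcal J}S)\cap Q|$. The approximation ratio is $\max OPT/\mathcal A$ over all set systems with $n$ items and $m$ sets and all queries $Q$. No computational restrictions are assumed. *)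

theory Defs
  imports Complex_Main "HOL-Library.Extended_Real"
begin

definition set_system :: "nat \<Rightarrow> nat \<Rightarrow> (nat \<Rightarrow> nat set) \<Rightarrow> bool" where
  "set_system n m I \<longleftrightarrow> (\<forall>i<m. I i \<subseteq> {1..n}) \<and> (\<forall>i\<ge>m. I i = {})"

definition OPT :: "nat \<Rightarrow> nat \<Rightarrow> (nat \<Rightarrow> nat set) \<Rightarrow> nat set \<Rightarrow> nat" where
  "OPT k m I Q = Max {card ((\<Union>i\<in>J. I i) \<inter> Q) | J. J \<subseteq> {..<m} \<and> card J \<le> k}"

(* A(k, X, I, Q) for an oracle given by a static stage and a dynamic stage;
   the dynamic stage only sees the datastructure D and the query Q. *)
definition alg_value ::
  "(nat \<Rightarrow> nat \<Rightarrow> nat \<Rightarrow> (nat \<Rightarrow> nat set) \<Rightarrow> bool list) \<Rightarrow> (bool list \<Rightarrow> nat set \<Rightarrow> nat set)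
    \<Rightarrow> nat \<Rightarrow> nat \<Rightarrow> nat \<Rightarrow> (nat \<Rightarrow> nat set) \<Rightarrow> nat set \<Rightarrow> nat" where
  "alg_value static dyn k n m I Q = card ((\<Union>i\<in>dyn (static n m k I) Q. I i) \<inter> Q)"

definition single_ratio :: "nat \<Rightarrow> nat \<Rightarrow> ereal" where
  "single_ratio opt a = (if a = 0 then (if opt = 0 then 1 else \<infinity>) else ereal (real opt / real a))"

definition approx_ratio ::
  "(nat \<Rightarrow> nat \<Rightarrow> nat \<Rightarrow> (nat \<Rightarrow> nat set) \<Rightarrow> bool list) \<Rightarrow> (bool list \<Rightarrow> nat set \<Rightarrow> nat set)
    \<Rightarrow> nat \<Rightarrow> nat \<Rightarrow> nat \<Rightarrow> ereal" where
  "approx_ratio static dyn k n m =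
     Sup {single_ratio (OPT k m I Q) (alg_value static dyn k n m I Q) | I Q.
            set_system n m I \<and> Q \<subseteq> {1..n}}"

end

theory Submission
  imports Defs "HOL-Computational_Algebra.Computational_Algebra" "HOL-Combinatorics.Permutations"
begin

lemma poly_mod_roots:
  fixes d :: "int poly"
  assumes "prime q" "degree d < card {x::nat. x < q \<and> int q dvd poly d (int x)}"
  shows "\<exists>e. d = smult (int q) e"
  using assms
proof (induction "degree d" arbitrary: d)
  case 0
  then have "{x::nat. x < q \<and> int q dvd poly d (int x)} \<noteq> {}" by (metis card.empty less_numeral_extra(3))
  then obtain x where "int q dvd poly d (int x)" by auto
  moreover have d: "d = [:coeff d 0:]" using degree_0_id[OF 0(1)[symmetric]] by simp
  ultimately have "int q dvd coeff d 0" by (metis poly_pCons mult_zero_right add.right_neutral poly_0)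
  then obtain k where "coeff d 0 = int q * k" by (auto simp: dvd_def)
  then have "d = smult (int q) [:k:]" using d by simp
  then show ?case by blast
next
  case (Suc n)
  define S where "S = {x::nat. x < q \<and> int q dvd poly d (int x)}"
  have finS: "finite S" unfolding S_def by auto
  have "card S > 0" using Suc S_def by auto
  then obtain a where aS: "a \<in> S" using card_gt_0_iff by (metis all_not_in_conv)
  define g where "g = synthetic_div d (int a)"
  have deq: "d = [:- int a, 1:] * g + [:poly d (int a):]"
    unfolding g_def using synthetic_div_correct'[of "int a" d] by simp
  have dg: "n = degree g" unfolding g_def degree_synthetic_div using Suc(2) by simp
  define Sg where "Sg = {x::nat. x < q \<and> int q dvd poly g (int x)}"
  have pq: "prime (int q)" using Suc(3) by simp
  have "S - {a} \<subseteq> Sg"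
  proof
    fix x assume x: "x \<in> S - {a}"
    have qa: "int q dvd poly d (int a)" using aS S_def by auto
    have qx: "int q dvd poly d (int x)" using x S_def by auto
    have "poly d (int x) = (int x - int a) * poly g (int x) + poly d (int a)"
      by (subst deq) (simp add: algebra_simps)
    then have "int q dvd (int x - int a) * poly g (int x)"
      using qa qx by (metis dvd_add_left_iff)
    then have "int q dvd (int x - int a) \<or> int q dvd poly g (int x)"
      using pq prime_dvd_mult_iff by blast
    moreover have "\<not> int q dvd (int x - int a)"
    proof
      assume h: "int q dvd (int x - int a)"
      have "int x - int a \<noteq> 0" using x by auto
      then have "\<bar>int q\<bar> \<le> \<bar>int x - int a\<bar>" using dvd_imp_le_int h by blast
      moreover have "x < q" "a < q" using x aS S_def by auto
      ultimately show False by linarith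
    qed
    ultimately show "x \<in> Sg" using x S_def Sg_def by auto
  qed
  moreover have "finite Sg" unfolding Sg_def by auto
  ultimately have "card (S - {a}) \<le> card Sg" by (simp add: card_mono)
  moreover have "card (S - {a}) = card S - 1" using aS finS by simp
  moreover have "card S > Suc n" using Suc S_def by simp
  ultimately have "degree g < card Sg" using dg by linarith
  then obtain e where e: "g = smult (int q) e" using Suc(1)[OF dg] Suc(3) Sg_def by blast
  have "int q dvd poly d (int a)" using aS S_def by auto
  then obtain k where k: "poly d (int a) = int q * k" by (auto simp: dvd_def)
  have "smult (int q) ([:- int a, 1:] * e + [:k:]) = [:- int a, 1:] * smult (int q) e + smult (int q) [:k:]"
    by (simp only: smult_add_right mult_smult_right)
  also have "smult (int q) [:k:] = [:poly d (int a):]" using k by simp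
  finally have "d = smult (int q) ([:- int a, 1:] * e + [:k:])"
    using deq e by simp
  then show ?case by blast
qed

definition val :: "nat \<Rightarrow> nat \<Rightarrow> (nat \<Rightarrow> nat) \<Rightarrow> nat \<Rightarrow> nat" where
  "val q t a x = (\<Sum>i\<le>t. a i * x ^ i) mod q"

definition cw :: "nat \<Rightarrow> nat \<Rightarrow> (nat \<Rightarrow> nat) \<Rightarrow> nat set" where
  "cw q t a = (\<lambda>x. 1 + x + q * val q t a x) ` {..<q}"

lemma enc_inj:
  fixes q x x' y y' :: nat
  assumes "x < q" "x' < q" "1 + x + q * y = 1 + x' + q * y'"
  shows "x = x' \<and> y = y'"
proof -
  have "(x + q * y) mod q = (x' + q * y') mod q" using assms(3) by simp
  then have xx: "x = x'" using assms(1,2) by simp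
  then have "q * y = q * y'" using assms(3) by simp
  then show ?thesis using xx assms(1) by simp
qed

lemma cw_card: "card (cw q t a) = q"
proof -
  have "inj_on (\<lambda>x. 1 + x + q * val q t a x) {..<q}"
  proof (rule inj_onI)
    fix x y assume "x \<in> {..<q}" "y \<in> {..<q}" "1 + x + q * val q t a x = 1 + y + q * val q t a y"
    then show "x = y" using enc_inj[of x q y] by blast
  qed
  then have "card ((\<lambda>x. 1 + x + q * val q t a x) ` {..<q}) = q" by (simp add: card_image)
  then show ?thesis by (simp only: cw_def)
qed

lemma cw_sub: "0 < q \<Longrightarrow> cw q t a \<subseteq> {1..q^2}"
proof
  fix z assume q: "0 < q" and "z \<in> cw q t a"
  then obtain x where x: "x < q" "z = 1 + x + q * val q t a x" unfolding cw_def by auto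
  have "val q t a x < q" unfolding val_def using q by simp
  then have "val q t a x \<le> q - 1" by linarith
  then have "q * val q t a x \<le> q * (q - 1)" by simp
  moreover have "x \<le> q - 1" using x by simp
  ultimately have "z \<le> 1 + (q - 1) + q * (q - 1)" using x by linarith
  also have "\<dots> = q^2" using q by (simp add: power2_eq_square algebra_simps)
  finally show "z \<in> {1..q^2}" using x by simp
qed

lemma cw_inter:
  assumes pq: "prime q" and ab: "\<forall>i\<le>t. a i < q \<and> b i < q" and ne: "\<exists>i\<le>t. a i \<noteq> b i"
  shows "card (cw q t a \<inter> cw q t b) \<le> t"
proof -
  define A where "A = {x. x < q \<and> val q t a x = val q t b x}"
  have "cw q t a \<inter> cw q t b \<subseteq> (\<lambda>x. 1 + x + q * val q t a x) ` A"
  proof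
    fix z assume z: "z \<in> cw q t a \<inter> cw q t b"
    then have "z \<in> (\<lambda>x. 1 + x + q * val q t a x) ` {..<q}" unfolding cw_def by blast
    then obtain x where x: "x < q" "z = 1 + x + q * val q t a x" by blast
    have "z \<in> (\<lambda>x. 1 + x + q * val q t b x) ` {..<q}" using z unfolding cw_def by blast
    then obtain x' where x': "x' < q" "z = 1 + x' + q * val q t b x'" by blast
    have "1 + x + q * val q t a x = 1 + x' + q * val q t b x'" using x x' by simp
    then have "x = x' \<and> val q t a x = val q t b x'" using enc_inj[OF x(1) x'(1)] by blast
    then have "val q t a x = val q t b x" by blast
    then have "x \<in> A" unfolding A_def using x(1) by blast
    then show "z \<in> (\<lambda>x. 1 + x + q * val q t a x) ` A" using x(2) by (rule rev_image_eqI)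
  qed
  moreover have "finite A" unfolding A_def by auto
  ultimately have c1: "card (cw q t a \<inter> cw q t b) \<le> card A"
    by (meson card_image_le card_mono finite_imageI order_trans)
  show ?thesis
  proof (rule ccontr)
    assume "\<not> ?thesis"
    then have cA: "card A > t" using c1 by linarith
    define d :: "int poly" where "d = (\<Sum>i\<le>t. monom (int (a i) - int (b i)) i)"
    have cd: "coeff d j = (if j \<le> t then int (a j) - int (b j) else 0)" for j
      unfolding d_def by (simp add: coeff_sum coeff_monom)
    have dd: "degree d \<le> t" by (rule degree_le) (simp add: cd)
    have pd: "poly d (int x) = int (\<Sum>i\<le>t. a i * x ^ i) - int (\<Sum>i\<le>t. b i * x ^ i)" for x
    proof -
      have "poly d (int x) = (\<Sum>i\<le>t. (int (a i) - int (b i)) * int x ^ i)"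
        unfolding d_def by (simp add: poly_sum poly_monom)
      also have "\<dots> = (\<Sum>i\<le>t. int (a i) * int x ^ i) - (\<Sum>i\<le>t. int (b i) * int x ^ i)"
        by (simp add: sum_subtractf left_diff_distrib)
      finally show ?thesis by simp
    qed
    have "A \<subseteq> {x::nat. x < q \<and> int q dvd poly d (int x)}"
    proof
      fix x assume "x \<in> A"
      then have x: "x < q" "val q t a x = val q t b x" unfolding A_def by auto
      then have "int (\<Sum>i\<le>t. a i * x ^ i) mod int q = int (\<Sum>i\<le>t. b i * x ^ i) mod int q"
        using x(2) unfolding val_def by (simp only: of_nat_mod[symmetric])
      then have "int q dvd poly d (int x)" unfolding pd by (simp add: mod_eq_dvd_iff)
      then show "x \<in> {x::nat. x < q \<and> int q dvd poly d (int x)}" using x by simp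
    qed
    then have "card A \<le> card {x::nat. x < q \<and> int q dvd poly d (int x)}"
      by (intro card_mono) auto
    then have "degree d < card {x::nat. x < q \<and> int q dvd poly d (int x)}" using dd cA by linarith
    then obtain e where e: "d = smult (int q) e" using poly_mod_roots pq by blast
    obtain i where i: "i \<le> t" "a i \<noteq> b i" using ne by blast
    have "int (a i) - int (b i) = int q * coeff e i" using cd[of i] e i by simp
    then have "int q dvd int (a i) - int (b i)" by simp
    moreover have "int (a i) - int (b i) \<noteq> 0" using i by simp
    ultimately have "\<bar>int q\<bar> \<le> \<bar>int (a i) - int (b i)\<bar>" using dvd_imp_le_int by blast
    moreover have "a i < q" "b i < q" using ab i by auto
    ultimately show False by linarith
  qed
qed

lemma dig_inj:
  fixes q :: nat
  assumes "0 < q"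
  shows "c < q^k \<Longrightarrow> c' < q^k \<Longrightarrow> (\<forall>i<k. c div q^i mod q = c' div q^i mod q) \<Longrightarrow> c = c'"
proof (induction k arbitrary: c c')
  case 0
  then show ?case by simp
next
  case (Suc k)
  have m: "c mod q = c' mod q" using Suc(4)[rule_format, of 0] by simp
  have "c < q^k * q" using Suc(2) by (simp only: power_Suc mult.commute)
  then have 1: "c div q < q^k" by (rule less_mult_imp_div_less)
  have "c' < q^k * q" using Suc(3) by (simp only: power_Suc mult.commute)
  then have 2: "c' div q < q^k" by (rule less_mult_imp_div_less)
  have 3: "\<forall>i<k. c div q div q^i mod q = c' div q div q^i mod q"
  proof (intro allI impI)
    fix i assume "i < k"
    then have "Suc i < Suc k" by simp
    then have "c div q^(Suc i) mod q = c' div q^(Suc i) mod q" by (rule Suc(4)[rule_format])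
    then show "c div q div q^i mod q = c' div q div q^i mod q" by (simp only: power_Suc div_mult2_eq)
  qed
  have "c div q = c' div q" using Suc(1)[OF 1 2 3] .
  then show ?case using m by (metis div_mult_mod_eq)
qed


lemma approx_ge:
  assumes "set_system n m I" "Q \<subseteq> {1..n}"
  shows "single_ratio (OPT 1 m I Q) (alg_value static dyn 1 n m I Q) \<le> approx_ratio static dyn 1 n m"
  unfolding approx_ratio_def by (rule Sup_upper) (use assms in blast)

lemma OPT_ge:
  assumes "i < m"
  shows "card (I i \<inter> Q) \<le> OPT 1 m I Q"
proof -
  have fin: "finite {card ((\<Union>i\<in>J. I i) \<inter> Q) | J. J \<subseteq> {..<m} \<and> card J \<le> 1}"
  proof -
    have "{card ((\<Union>i\<in>J. I i) \<inter> Q) | J. J \<subseteq> {..<m} \<and> card J \<le> 1}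
          \<subseteq> (\<lambda>J. card ((\<Union>i\<in>J. I i) \<inter> Q)) ` Pow {..<m}" by blast
    then show ?thesis by (rule finite_subset) simp
  qed
  have "card ((\<Union>i\<in>{i}. I i) \<inter> Q) \<in> {card ((\<Union>i\<in>J. I i) \<inter> Q) | J. J \<subseteq> {..<m} \<and> card J \<le> 1}"
    using assms by (intro CollectI exI[of _ "{i}"]) auto
  then show ?thesis unfolding OPT_def using Max_ge[OF fin] by simp
qed

lemma ratio_ge:
  fixes s t opt a :: nat
  assumes "0 < t" "t < s" "s \<le> opt" "a \<le> t"
  shows "ereal (real s / real t) \<le> single_ratio opt a"
proof (cases "a = 0")
  case True
  then show ?thesis using assms by (simp add: single_ratio_def)
next
  case False
  have "real s / real t \<le> real opt / real a"
    using assms False by (intro frac_le) auto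
  then show ?thesis using False by (simp add: single_ratio_def)
qed

lemma lists_card: "card {xs :: bool list. length xs \<le> L} < 2 ^ Suc L"
proof -
  have "card {xs :: bool list. set xs \<subseteq> UNIV \<and> length xs \<le> L} = (\<Sum>i\<le>L. 2^i)"
    using card_lists_length_le[of "UNIV :: bool set" L] by simp
  moreover have "(\<Sum>i\<le>L. (2::nat)^i) < 2 ^ Suc L" by (induction L) auto
  ultimately show ?thesis by simp
qed

lemma key:
  fixes static :: "nat \<Rightarrow> nat \<Rightarrow> nat \<Rightarrow> (nat \<Rightarrow> nat set) \<Rightarrow> bool list"
    and dyn :: "bool list \<Rightarrow> nat set \<Rightarrow> nat set"
    and e :: "nat \<Rightarrow> nat set"
  assumes valid: "\<forall>I Q. set_system n m I \<and> Q \<subseteq> {1..n} \<longrightarrow>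
                  dyn (static n m 1 I) Q \<subseteq> {..<m} \<and> card (dyn (static n m 1 I) Q) \<le> 1"
    and esub: "\<forall>c<m. e c \<subseteq> {1..n}" and ecard: "\<forall>c<m. card (e c) = s"
    and einter: "\<forall>c<m. \<forall>c'<m. c \<noteq> c' \<longrightarrow> card (e c \<inter> e c') \<le> t"
    and ts: "0 < t" "t < s"
    and len: "\<forall>I. set_system n m I \<longrightarrow> length (static n m 1 I) \<le> L"
    and big: "2 ^ Suc L \<le> (fact m :: nat)"
  shows "ereal (real s / real t) \<le> approx_ratio static dyn 1 n m"
proof -
  define P where "P = {p. p permutes {..<m}}"
  define sysI where "sysI p = (\<lambda>i. if i < m then e (p i) else {})" for p :: "nat \<Rightarrow> nat"
  have cP: "card P = fact m" unfolding P_def by (rule card_permutations) auto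
  have finP: "finite P" unfolding P_def by (rule finite_permutations) auto
  have ss: "set_system n m (sysI p)" if "p \<in> P" for p
    unfolding set_system_def sysI_def
    using that esub permutes_in_image[of p "{..<m}"] unfolding P_def by auto
  have einj: "c = c'" if "c < m" "c' < m" "e c = e c'" for c c'
  proof (rule ccontr)
    assume "c \<noteq> c'"
    then have "card (e c \<inter> e c') \<le> t" using einter that by blast
    then show False using that ecard ts by simp
  qed
  define F where "F p = static n m 1 (sysI p)" for p
  have "\<not> inj_on F P"
  proof
    assume inj: "inj_on F P"
    have "F ` P \<subseteq> {xs :: bool list. length xs \<le> L}" using len ss unfolding F_def by auto
    then have "card (F ` P) \<le> card {xs :: bool list. length xs \<le> L}"
      by (intro card_mono) (auto simp: finite_lists_length_le[of "UNIV :: bool set" L, simplified])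
    then have "card P < 2 ^ Suc L" using card_image[OF inj] lists_card[of L] by simp
    then show False using cP big by simp
  qed
  then obtain p p' where pp: "p \<in> P" "p' \<in> P" "p \<noteq> p'" "F p = F p'"
    unfolding inj_on_def by blast
  then obtain i where i: "p i \<noteq> p' i" by blast
  have pP: "p permutes {..<m}" "p' permutes {..<m}" using pp unfolding P_def by auto
  have im: "i < m"
  proof (rule ccontr)
    assume "\<not> i < m"
    then have "i \<notin> {..<m}" by simp
    then have "p i = i" "p' i = i" using pP permutes_not_in by metis+
    then show False using i by simp
  qed
  have pim: "p i < m" "p' i < m"
    using permutes_in_image[OF pP(1), of i] permutes_in_image[OF pP(2), of i] im by simp_all
  define i' where "i' = inv p' (p i)"
  have i'm: "i' < m" unfolding i'_def using permutes_in_image[OF permutes_inv[OF pP(2)], of "p i"] pim by simp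
  have pi': "p' i' = p i" unfolding i'_def using permutes_inverses(1)[OF pP(2)] by simp
  have ii': "i \<noteq> i'" using pi' i by auto
  define Q where "Q = e (p i)"
  have Qs: "Q \<subseteq> {1..n}" using esub pim unfolding Q_def by blast
  have cQ: "card Q = s" using ecard pim unfolding Q_def by blast
  define J where "J = dyn (F p) Q"
  have J: "J \<subseteq> {..<m}" "card J \<le> 1" using valid ss[OF pp(1)] Qs unfolding J_def F_def by blast+
  have J': "J = dyn (static n m 1 (sysI p')) Q" unfolding J_def using pp(4) F_def by simp
  have J1: "J = {} \<or> (\<exists>j. J = {j})"
  proof -
    have "finite J" using J(1) finite_subset by blast
    show ?thesis
    proof (cases "J = {}")
      case False
      then obtain j where jJ: "j \<in> J" by blast
      have "\<forall>a1\<in>J. \<forall>a2\<in>J. a1 = a2" using J(2) card_le_Suc0_iff_eq[OF \<open>finite J\<close>] by simp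
      then have "J = {j}" using jJ by blast
      then show ?thesis by blast
    qed simp
  qed
  have optp: "s \<le> OPT 1 m (sysI p) Q"
    using OPT_ge[OF im, of "sysI p" Q] im cQ unfolding sysI_def Q_def by simp
  have optp': "s \<le> OPT 1 m (sysI p') Q"
    using OPT_ge[OF i'm, of "sysI p'" Q] i'm cQ pi' unfolding sysI_def Q_def by simp
  have algp: "alg_value static dyn 1 n m (sysI p) Q = card ((\<Union>j\<in>J. sysI p j) \<inter> Q)"
    unfolding alg_value_def J_def F_def by simp
  have algp': "alg_value static dyn 1 n m (sysI p') Q = card ((\<Union>j\<in>J. sysI p' j) \<inter> Q)"
    unfolding alg_value_def J' by simp
  show ?thesis
  proof (cases "J = {}")
    case True
    then have "alg_value static dyn 1 n m (sysI p) Q \<le> t" using algp by simp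
    then have "ereal (real s / real t) \<le> single_ratio (OPT 1 m (sysI p) Q) (alg_value static dyn 1 n m (sysI p) Q)"
      using ratio_ge ts optp by blast
    then show ?thesis using approx_ge[OF ss[OF pp(1)] Qs] by (rule order_trans)
  next
    case False
    then obtain j where j: "J = {j}" using J1 by blast
    have jm: "j < m" using J(1) j by auto
    show ?thesis
    proof (cases "j = i")
      case False
      have pj: "p j < m" using permutes_in_image[OF pP(1), of j] jm by simp
      have "p j \<noteq> p i" using False inj_eq[OF permutes_inj[OF pP(1)]] by simp
      then have "card (e (p j) \<inter> e (p i)) \<le> t" using einter pj pim by blast
      then have "alg_value static dyn 1 n m (sysI p) Q \<le> t" using algp j jm unfolding sysI_def Q_def by simp
      then have "ereal (real s / real t) \<le> single_ratio (OPT 1 m (sysI p) Q) (alg_value static dyn 1 n m (sysI p) Q)"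
        using ratio_ge ts optp by blast
      then show ?thesis using approx_ge[OF ss[OF pp(1)] Qs] by (rule order_trans)
    next
      case True
      have "p' i \<noteq> p' i'" using ii' inj_eq[OF permutes_inj[OF pP(2)]] by simp
      moreover have "p' i' < m" using pi' pim by simp
      ultimately have "card (e (p' i) \<inter> e (p' i')) \<le> t" using einter pim(2) by blast
      then have "alg_value static dyn 1 n m (sysI p') Q \<le> t"
        using algp' j True im pi' unfolding sysI_def Q_def by simp
      then have "ereal (real s / real t) \<le> single_ratio (OPT 1 m (sysI p') Q) (alg_value static dyn 1 n m (sysI p') Q)"
        using ratio_ge ts optp' by blast
      then show ?thesis using approx_ge[OF ss[OF pp(2)] Qs] by (rule order_trans)
    qed
  qed
qed


lemma fact_big: "6 \<le> m \<Longrightarrow> 2 ^ (m + 2) \<le> (fact m :: nat)"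
proof (induction m rule: nat_induct_at_least)
  case base
  then show ?case by (simp add: fact_numeral)
next
  case (Suc m)
  have "(2::nat) ^ (Suc m + 2) = 2 * 2 ^ (m + 2)" by simp
  also have "\<dots> \<le> 2 * fact m" using Suc.IH by simp
  also have "\<dots> \<le> Suc m * fact m" using Suc.hyps by (intro mult_right_mono) auto
  also have "\<dots> = fact (Suc m)" by simp
  finally show ?case .
qed

lemma num_case2:
  fixes \<epsilon> \<delta> C :: real and q M :: nat
  assumes eps0: "0 < \<epsilon>" and eps1: "\<epsilon> \<le> 1/2" and de: "0 < \<delta>" "\<delta> \<le> \<epsilon>"
    and t: "t = nat \<lceil>1/\<epsilon>\<rceil>"
    and qK: "max (real M + real t + 7) ((\<bar>C\<bar> * real t + 1) powr (\<epsilon>/\<delta>)) < real q"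
    and m: "m = nat \<lfloor>real q powr (1/\<epsilon>)\<rfloor>"
  shows "2 \<le> t" "M \<le> m" "t < q" "7 \<le> m" "real m powr \<epsilon> \<le> sqrt (real (q^2))"
    "m \<le> q ^ (t + 1)"
    "real (q^2) * real m powr (1 - 2 * \<epsilon>) \<le> real m + 1"
    "C * real m powr (\<epsilon> - \<delta>) < real q / real t"
proof -
  have te: "1/\<epsilon> \<le> real t" unfolding t by linarith
  have e2: "2 \<le> 1/\<epsilon>" using eps0 eps1 by (simp add: field_simps)
  then show t2: "2 \<le> t" using te unfolding t by linarith
  have qt: "real M + real t + 7 < real q" using qK by simp
  then show "t < q" by linarith
  have q2: "2 \<le> real q" using qt t2 by linarith
  have mle: "real m \<le> real q powr (1/\<epsilon>)" unfolding m using q2 by simp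
  have mgt: "real q powr (1/\<epsilon>) < real m + 1" unfolding m using q2 by linarith
  have "real q powr 2 \<le> real q powr (1/\<epsilon>)" using q2 e2 by (intro powr_mono) auto
  then have qq: "real q ^ 2 \<le> real q powr (1/\<epsilon>)" using q2 by (simp add: powr_numeral)
  have "real q ^ 2 \<ge> 2 * real q" using q2 by (simp add: power2_eq_square)
  then have mq: "real q \<le> real m" using qq mgt q2 by linarith
  then show "M \<le> m" "7 \<le> m" using qt by linarith+
  have "real m powr \<epsilon> \<le> (real q powr (1/\<epsilon>)) powr \<epsilon>" using mle eps0 by (intro powr_mono2) auto
  also have "\<dots> = real q" using eps0 q2 by (simp add: powr_powr)
  finally have meq: "real m powr \<epsilon> \<le> real q" .
  then show "real m powr \<epsilon> \<le> sqrt (real (q^2))" by simp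
  have "real q powr (1/\<epsilon>) \<le> real q powr (real (t+1))" using te q2 by (intro powr_mono) auto
  also have "\<dots> = real q ^ (t + 1)" using q2 powr_realpow[of "real q" "t+1"] by linarith
  finally have "real m \<le> real (q ^ (t+1))" using mle by simp
  then show "m \<le> q ^ (t + 1)" by linarith
  have "real q = (real q powr (1/\<epsilon>)) powr \<epsilon>" using eps0 q2 by (simp add: powr_powr)
  also have "\<dots> < (real m + 1) powr \<epsilon>" using mgt eps0 q2 by (intro powr_less_mono2) auto
  finally have qm1: "real q < (real m + 1) powr \<epsilon>" .
  have "real (q^2) = real q * real q" by (simp add: power2_eq_square)
  also have "\<dots> \<le> (real m + 1) powr \<epsilon> * (real m + 1) powr \<epsilon>" using qm1 q2
    by (intro mult_mono) auto
  also have "\<dots> = (real m + 1) powr (2 * \<epsilon>)" by (simp add: powr_add[symmetric])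
  finally have A: "real (q^2) \<le> (real m + 1) powr (2 * \<epsilon>)" .
  have B: "real m powr (1 - 2 * \<epsilon>) \<le> (real m + 1) powr (1 - 2 * \<epsilon>)" using eps1 by (intro powr_mono2) auto
  have "real (q^2) * real m powr (1 - 2 * \<epsilon>) \<le> (real m + 1) powr (2 * \<epsilon>) * (real m + 1) powr (1 - 2 * \<epsilon>)"
    using A B by (intro mult_mono) auto
  also have "\<dots> = real m + 1" by (simp add: powr_add[symmetric])
  finally show "real (q^2) * real m powr (1 - 2 * \<epsilon>) \<le> real m + 1" .
  show "C * real m powr (\<epsilon> - \<delta>) < real q / real t"
  proof (cases "C \<le> 0")
    case True
    then have "C * real m powr (\<epsilon> - \<delta>) \<le> 0" by (simp add: mult_nonpos_nonneg)
    also have "0 < real q / real t" using q2 t2 by simp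
    finally show ?thesis .
  next
    case False
    then have C0: "0 < C" by simp
    define X where "X = real q powr (\<delta>/\<epsilon>)"
    have "C * real t + 1 = ((C * real t + 1) powr (\<epsilon>/\<delta>)) powr (\<delta>/\<epsilon>)"
      using de eps0 C0 t2 by (simp add: powr_powr)
    also have "\<dots> < X" unfolding X_def using qK C0 de eps0 by (intro powr_less_mono2) auto
    finally have X: "C * real t < X" by simp
    have X0: "0 < X" unfolding X_def using q2 by simp
    have "real m powr (\<epsilon> - \<delta>) = (real m powr \<epsilon>) powr ((\<epsilon> - \<delta>)/\<epsilon>)"
      using eps0 by (simp add: powr_powr)
    also have "\<dots> \<le> real q powr ((\<epsilon> - \<delta>)/\<epsilon>)" using meq de eps0 by (intro powr_mono2) auto
    also have "(\<epsilon> - \<delta>)/\<epsilon> = 1 - \<delta>/\<epsilon>" using eps0 by (simp add: field_simps)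
    also have "real q powr (1 - \<delta>/\<epsilon>) = real q / X" unfolding X_def using q2 by (simp add: powr_diff)
    finally have mX: "real m powr (\<epsilon> - \<delta>) \<le> real q / X" .
    have "C * real m powr (\<epsilon> - \<delta>) \<le> C * (real q / X)" using mX C0 by (intro mult_left_mono) auto
    also have "\<dots> < real q / real t"
    proof -
      have "real q * (C * real t) < real q * X" using X q2 by simp
      then show ?thesis using X0 t2 by (simp add: field_simps)
    qed
    finally show ?thesis .
  qed
qed


lemma lower_one: "1 \<le> approx_ratio static dyn 1 n m"
proof -
  have ss: "set_system n m (\<lambda>_. {})" by (simp add: set_system_def)
  have "alg_value static dyn 1 n m (\<lambda>_. {}) {} = 0" by (simp add: alg_value_def)
  then have "1 \<le> single_ratio (OPT 1 m (\<lambda>_. {}) {}) (alg_value static dyn 1 n m (\<lambda>_. {}) {})"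
    by (simp add: single_ratio_def)
  also have "\<dots> \<le> approx_ratio static dyn 1 n m" using approx_ge[OF ss] by simp
  finally show ?thesis .
qed

theorem mainTheorem7:
  fixes \<epsilon> \<delta> :: real
    and static :: "nat \<Rightarrow> nat \<Rightarrow> nat \<Rightarrow> (nat \<Rightarrow> nat set) \<Rightarrow> bool list"
    and dyn :: "bool list \<Rightarrow> nat set \<Rightarrow> nat set"
  assumes eps0: "0 \<le> \<epsilon>" and eps1: "\<epsilon> \<le> 1/2"
    and valid: "\<forall>n m I Q. set_system n m I \<and> Q \<subseteq> {1..n} \<longrightarrow>
                  dyn (static n m 1 I) Q \<subseteq> {..<m} \<and> card (dyn (static n m 1 I) Q) \<le> 1"
    and space: "\<forall>n m I. 1 \<le> n \<and> 1 \<le> m \<and> real m powr \<epsilon> \<le> sqrt (real n) \<and> set_system n m I \<longrightarrow>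
                  real (length (static n m 1 I)) \<le> real n * real m powr (1 - 2 * \<epsilon>)"
    and delta: "\<delta> > 0"
  shows "\<not> (\<exists>C M. \<forall>n m. 1 \<le> n \<and> M \<le> m \<and> real m powr \<epsilon> \<le> sqrt (real n) \<longrightarrow>
                 approx_ratio static dyn 1 n m \<le> ereal (C * real m powr (\<epsilon> - \<delta>)))"
proof
  assume "\<exists>C M. \<forall>n m. 1 \<le> n \<and> M \<le> m \<and> real m powr \<epsilon> \<le> sqrt (real n) \<longrightarrow>
                 approx_ratio static dyn 1 n m \<le> ereal (C * real m powr (\<epsilon> - \<delta>))"
  then obtain C M where H: "\<And>n m. 1 \<le> n \<Longrightarrow> M \<le> m \<Longrightarrow> real m powr \<epsilon> \<le> sqrt (real n) \<Longrightarrow>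
                 approx_ratio static dyn 1 n m \<le> ereal (C * real m powr (\<epsilon> - \<delta>))" by blast
  show False
  proof (cases "\<epsilon> < \<delta>")
    case True
    define C' where "C' = max C 1"
    have C'1: "1 \<le> C'" unfolding C'_def by simp
    define m where "m = max (max M 1) (nat \<lceil>C' powr (1/(\<delta>-\<epsilon>))\<rceil> + 1)"
    have m1: "1 \<le> m" "M \<le> m" unfolding m_def by auto
    have "C' powr (1/(\<delta>-\<epsilon>)) < real m" unfolding m_def by linarith
    then have "(C' powr (1/(\<delta>-\<epsilon>))) powr (\<delta>-\<epsilon>) < real m powr (\<delta>-\<epsilon>)"
      using True C'1 by (intro powr_less_mono2) auto
    moreover have "(C' powr (1/(\<delta>-\<epsilon>))) powr (\<delta>-\<epsilon>) = C'" using True C'1 by (simp add: powr_powr)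
    ultimately have Cm: "C' < real m powr (\<delta>-\<epsilon>)" by simp
    have "real m powr (\<epsilon> - \<delta>) = inverse (real m powr (\<delta>-\<epsilon>))"
      using powr_minus[of "real m" "\<delta>-\<epsilon>"] by simp
    moreover have "0 < real m powr (\<delta>-\<epsilon>)" using Cm C'1 by linarith
    ultimately have "C' * real m powr (\<epsilon> - \<delta>) < 1" using Cm
      by (simp add: divide_less_eq_1_pos divide_inverse[symmetric])
    moreover have "C * real m powr (\<epsilon> - \<delta>) \<le> C' * real m powr (\<epsilon> - \<delta>)"
      unfolding C'_def by (intro mult_right_mono) auto
    ultimately have lt: "C * real m powr (\<epsilon> - \<delta>) < 1" by linarith
    have "real m powr \<epsilon> \<le> real m powr (1/2)" using eps1 m1 by (intro powr_mono) auto
    then have "real m powr \<epsilon> \<le> sqrt (real m)" by (simp add: powr_half_sqrt)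
    then have "approx_ratio static dyn 1 m m \<le> ereal (C * real m powr (\<epsilon> - \<delta>))" using H m1 by blast
    then have "1 \<le> ereal (C * real m powr (\<epsilon> - \<delta>))" using lower_one order_trans by blast
    then show False using lt by simp
  next
    case False
    then have de: "0 < \<delta>" "\<delta> \<le> \<epsilon>" using delta by auto
    then have e0: "0 < \<epsilon>" by simp
    define t where "t = nat \<lceil>1/\<epsilon>\<rceil>"
    define K where "K = max (real M + real t + 7) ((\<bar>C\<bar> * real t + 1) powr (\<epsilon>/\<delta>))"
    obtain q where q: "prime q" "nat \<lceil>K\<rceil> < q" using bigger_prime by blast
    have qK: "K < real q" using q(2) by linarith
    define m where "m = nat \<lfloor>real q powr (1/\<epsilon>)\<rfloor>"
    note nc = num_case2[OF e0 eps1 de t_def qK[unfolded K_def] m_def]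
    have q0: "0 < q" using q(1) prime_gt_0_nat by blast
    define e where "e c = cw q t (\<lambda>i. c div q^i mod q)" for c
    have "ereal (real q / real t) \<le> approx_ratio static dyn 1 (q^2) m"
    proof (rule key[where e = e and L = "m + 1"])
      show "\<forall>I Q. set_system (q^2) m I \<and> Q \<subseteq> {1..q^2} \<longrightarrow>
                  dyn (static (q^2) m 1 I) Q \<subseteq> {..<m} \<and> card (dyn (static (q^2) m 1 I) Q) \<le> 1"
        using valid by blast
      show "\<forall>c<m. e c \<subseteq> {1..q^2}" unfolding e_def using cw_sub q0 by blast
      show "\<forall>c<m. card (e c) = q" unfolding e_def using cw_card by blast
      show "0 < t" "t < q" using nc(1,3) by auto
      show "\<forall>c<m. \<forall>c'<m. c \<noteq> c' \<longrightarrow> card (e c \<inter> e c') \<le> t"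
      proof (intro allI impI)
        fix c c' assume c: "c < m" "c' < m" "c \<noteq> c'"
        have "c < q ^ (t+1)" "c' < q ^ (t+1)" using c nc(6) by linarith+
        then have "\<not> (\<forall>i<t+1. c div q^i mod q = c' div q^i mod q)" using dig_inj[OF q0] c(3) by blast
        then have "\<exists>i\<le>t. c div q^i mod q \<noteq> c' div q^i mod q" using less_Suc_eq_le by auto
        moreover have "\<forall>i\<le>t. c div q^i mod q < q \<and> c' div q^i mod q < q" using q0 by simp
        ultimately show "card (e c \<inter> e c') \<le> t" unfolding e_def
          using cw_inter[OF q(1), of t "\<lambda>i. c div q^i mod q" "\<lambda>i. c' div q^i mod q"] by blast
      qed
      show "\<forall>I. set_system (q^2) m I \<longrightarrow> length (static (q^2) m 1 I) \<le> m + 1"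
      proof (intro allI impI)
        fix I assume "set_system (q^2) m I"
        moreover have "1 \<le> q^2" using q0 by simp
        moreover have "1 \<le> m" using nc(4) by simp
        ultimately have "real (length (static (q^2) m 1 I)) \<le> real (q^2) * real m powr (1 - 2 * \<epsilon>)"
          using space nc(5) by blast
        then have "real (length (static (q^2) m 1 I)) \<le> real m + 1" using nc(7) by linarith
        then show "length (static (q^2) m 1 I) \<le> m + 1" by linarith
      qed
      show "2 ^ Suc (m + 1) \<le> (fact m :: nat)" using fact_big[of m] nc(4) by simp
    qed
    moreover have "approx_ratio static dyn 1 (q^2) m \<le> ereal (C * real m powr (\<epsilon> - \<delta>))"
      using H[of "q^2" m] nc(2,5) q0 by simp
    ultimately have "real q / real t \<le> C * real m powr (\<epsilon> - \<delta>)" by (metis ereal_less_eq(3) order_trans)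
    then show False using nc(8) by linarith
  qed
qed

end
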